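(* Let $\mathcal{X}$ and $\mathcal{Y}$ be finite subsets of $\mathbb{R}$, each with $N$ elements. Let $S$ be a binary random variable with values $s_0,s_1$, $\mathbb{P}(S=s_0)>0$, $\mathbb{P}(S=s_1)>0$, and $X$ a random variable with values in $\mathcal{X}$ with $P^X_i=\mathbb{P}(X=i)>0$ for all $i\in\mathcal{X}$. Let $P^{X_{s}}_i=\mathbb{P}(X=i\mid S=s)$ for $s\in\{s_0,s_1\}$ (equal to $0$ for $i$ outside the support of $X$ given $S=s$). Let $P^{\tilde X}\in\mathbb{R}^{\mathcal{Y}}$ be a probability vector, $\gamma\in\Pi(P^X,P^{\tilde X})$, and let $\tilde X$ be the projected variable defined by: conditionally on $(X,S)=(i,s)$, $\tilde X=j$ with probability $\gamma_{i,j}/P^X_i$. Write $P^{\tilde X_s}_j=\mathbb{P}(\tilde X=j\mid S=s)$ and define the vector $V\in\mathbb{R}^{\mathcal{X}}$ by $$V=\frac{P^{X_{s_0}}-P^{X_{s_1}}}{P^X}\quad(\text{element-wise}).$$ Then $P^{\tilde X_{s_0}}-P^{\tilde X_{s_1}}=\gamma' V$. Consequently, if total repair holds, i.e. $P^{\tilde X_{s_0}}=P^{\tilde X_{s_1}}$, then the coupling satisfies $\gamma'V=\mathbb{0}$, where $\mathbb{0}\in\mathbb{R}^{N}$ is the zero vector.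
   Context: For probability vectors $P,Q$, $\Pi(P,Q)=\{\gamma\in\mathbb{R}_+^{\mathcal{X}\times\mathcal{Y}}:\gamma\mathbb{1}=P,\ \gamma'\mathbb{1}=Q\}$, where $\mathbb{1}$ is the all-ones vector and $\gamma'$ the transpose. "Total repair" means the conditional distributions of the projected feature $\tilde X$ given $S=s_0$ and given $S=s_1$ coincide. *)

theory Defs
  imports "HOL-Probability.Probability_Mass_Function"
begin

definition couplings :: "real set \<Rightarrow> real set \<Rightarrow> (real \<Rightarrow> real) \<Rightarrow> (real \<Rightarrow> real)
    \<Rightarrow> (real \<Rightarrow> real \<Rightarrow> real) set" where
  "couplings Xs Ys P Q = {\<gamma>. (\<forall>i\<in>Xs. \<forall>j\<in>Ys. \<gamma> i j \<ge> 0)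
      \<and> (\<forall>i\<in>Xs. (\<Sum>j\<in>Ys. \<gamma> i j) = P i)
      \<and> (\<forall>j\<in>Ys. (\<Sum>i\<in>Xs. \<gamma> i j) = Q j)}"

definition prob_vector :: "real set \<Rightarrow> (real \<Rightarrow> real) \<Rightarrow> bool" where
  "prob_vector Ys Q \<longleftrightarrow> (\<forall>j\<in>Ys. Q j \<ge> 0) \<and> (\<Sum>j\<in>Ys. Q j) = 1"

definition cond_prob :: "'a pmf \<Rightarrow> 'a set \<Rightarrow> 'a set \<Rightarrow> real" where
  "cond_prob M A B = measure_pmf.prob M (A \<inter> B) / measure_pmf.prob M B"

end

theory Submission
  imports Defs
begin

lemma prob_split:
  fixes M :: "('s \<times> real \<times> real) pmf"
  assumes "finite Xs" and "\<forall>(s, x, xt) \<in> set_pmf M. x \<in> Xs"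
  shows "measure_pmf.prob M A = (\<Sum>i\<in>Xs. measure_pmf.prob M (A \<inter> {(s, x, xt). x = i}))"
proof -
  have "measure_pmf.prob M A = measure_pmf.prob M (A \<inter> set_pmf M)"
    by (simp add: measure_Int_set_pmf)
  also have "A \<inter> set_pmf M = (\<Union>i\<in>Xs. A \<inter> {(s, x, xt). x = i} \<inter> set_pmf M)"
    using assms(2) by fastforce
  also have "measure_pmf.prob M \<dots> = (\<Sum>i\<in>Xs. measure_pmf.prob M (A \<inter> {(s, x, xt). x = i} \<inter> set_pmf M))"
    by (rule measure_pmf.finite_measure_finite_Union) (auto simp: assms(1) disjoint_family_on_def)
  also have "\<dots> = (\<Sum>i\<in>Xs. measure_pmf.prob M (A \<inter> {(s, x, xt). x = i}))"
    by (simp add: measure_Int_set_pmf)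
  finally show ?thesis .
qed

theorem mainTheorem2:
  fixes Xs Ys :: "real set" and N :: nat
    and M :: "('s \<times> real \<times> real) pmf"
    and s0 s1 :: 's
    and PXt :: "real \<Rightarrow> real"
    and \<gamma> :: "real \<Rightarrow> real \<Rightarrow> real"
  defines "PX \<equiv> \<lambda>i. measure_pmf.prob M {(s, x, xt). x = i}"
  defines "PXs \<equiv> \<lambda>s i. cond_prob M {(s', x, xt). x = i} {(s', x, xt). s' = s}"
  defines "PXts \<equiv> \<lambda>s j. cond_prob M {(s', x, xt). xt = j} {(s', x, xt). s' = s}"
  defines "V \<equiv> \<lambda>i. (PXs s0 i - PXs s1 i) / PX i"
  assumes "finite Xs" and "finite Ys" and "card Xs = N" and "card Ys = N"
    and "s0 \<noteq> s1"
    and "\<forall>(s, x, xt) \<in> set_pmf M. s \<in> {s0, s1} \<and> x \<in> Xs"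
    and "measure_pmf.prob M {(s, x, xt). s = s0} > 0"
    and "measure_pmf.prob M {(s, x, xt). s = s1} > 0"
    and "\<forall>i\<in>Xs. PX i > 0"
    and "prob_vector Ys PXt"
    and "\<gamma> \<in> couplings Xs Ys PX PXt"
    and "\<forall>i\<in>Xs. \<forall>s\<in>{s0, s1}. measure_pmf.prob M {(s', x, xt). s' = s \<and> x = i} > 0 \<longrightarrow>
           (\<forall>j\<in>Ys. cond_prob M {(s', x, xt). xt = j} {(s', x, xt). s' = s \<and> x = i}
                     = \<gamma> i j / PX i)"
  shows "(\<forall>j\<in>Ys. PXts s0 j - PXts s1 j = (\<Sum>i\<in>Xs. \<gamma> i j * V i))
       \<and> ((\<forall>j. PXts s0 j = PXts s1 j) \<longrightarrow> (\<forall>j\<in>Ys. (\<Sum>i\<in>Xs. \<gamma> i j * V i) = 0))"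
proof -
  have supp: "\<forall>(s, x, xt) \<in> set_pmf M. x \<in> Xs" using assms(10) by auto
  have key: "PXts s j = (\<Sum>i\<in>Xs. \<gamma> i j * PXs s i / PX i)" if s: "s \<in> {s0, s1}" and j: "j \<in> Ys" for s j
  proof -
    define ps where "ps = measure_pmf.prob M {(s', x, xt). s' = s}"
    define q where "q = (\<lambda>i. measure_pmf.prob M {(s', x, xt). s' = s \<and> x = i})"
    have ps: "ps > 0" using s assms(11,12) unfolding ps_def by auto
    have trm: "measure_pmf.prob M ({(s', x, xt). xt = j} \<inter> {(s', x, xt). s' = s} \<inter> {(s', x, xt). x = i})
        = \<gamma> i j / PX i * q i" if i: "i \<in> Xs" for i
    proof -
      have eq: "{(s', x, xt). xt = j} \<inter> {(s', x, xt). s' = s} \<inter> {(s', x, xt). x = i}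
          = {(s', x, xt). xt = j} \<inter> {(s', x, xt). s' = s \<and> x = i}" by auto
      show ?thesis
      proof (cases "q i > 0")
        case True
        with assms(16) i s j have "cond_prob M {(s', x, xt). xt = j} {(s', x, xt). s' = s \<and> x = i} = \<gamma> i j / PX i"
          unfolding q_def by blast
        with True show ?thesis unfolding eq cond_prob_def q_def by (auto simp: field_simps)
      next
        case False
        then have q0: "q i = 0" using measure_nonneg[of "measure_pmf M"] unfolding q_def
          by (metis less_eq_real_def)
        have "measure_pmf.prob M ({(s', x, xt). xt = j} \<inter> {(s', x, xt). s' = s \<and> x = i}) \<le> q i"
          unfolding q_def by (rule measure_pmf.finite_measure_mono) auto
        then have "measure_pmf.prob M ({(s', x, xt). xt = j} \<inter> {(s', x, xt). s' = s \<and> x = i}) = 0"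
          using q0 measure_nonneg[of "measure_pmf M"] by (metis order_antisym)
        then show ?thesis unfolding eq using q0 by simp
      qed
    qed
    have pxs: "PXs s i = q i / ps" for i
    proof -
      have e: "{(s', x, xt). x = i} \<inter> {(s', x, xt). s' = s} = {(s', x, xt). s' = s \<and> x = (i::real)}" by auto
      show ?thesis unfolding PXs_def cond_prob_def q_def ps_def e by (rule refl)
    qed
    have "PXts s j = measure_pmf.prob M ({(s', x, xt). xt = j} \<inter> {(s', x, xt). s' = s}) / ps"
      unfolding PXts_def cond_prob_def ps_def by simp
    also have "\<dots> = (\<Sum>i\<in>Xs. \<gamma> i j / PX i * q i) / ps"
      using prob_split[OF assms(5) supp, of "{(s', x, xt). xt = j} \<inter> {(s', x, xt). s' = s}"] trm
      by simp
    also have "\<dots> = (\<Sum>i\<in>Xs. \<gamma> i j * PXs s i / PX i)"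
      unfolding pxs sum_divide_distrib by (rule sum.cong) auto
    finally show ?thesis .
  qed
  have A: "\<forall>j\<in>Ys. PXts s0 j - PXts s1 j = (\<Sum>i\<in>Xs. \<gamma> i j * V i)"
  proof
    fix j assume j: "j \<in> Ys"
    have "PXts s0 j - PXts s1 j = (\<Sum>i\<in>Xs. \<gamma> i j * PXs s0 i / PX i - \<gamma> i j * PXs s1 i / PX i)"
      using key[OF _ j, of s0] key[OF _ j, of s1] by (simp add: sum_subtractf)
    also have "\<dots> = (\<Sum>i\<in>Xs. \<gamma> i j * V i)"
      unfolding V_def by (rule sum.cong) (auto simp: field_simps diff_divide_distrib)
    finally show "PXts s0 j - PXts s1 j = (\<Sum>i\<in>Xs. \<gamma> i j * V i)" .
  qed
  then show ?thesis by auto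
qed

end
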